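(* Let $\lambda$ be a cardinal with $\lambda^{\aleph_0}=\lambda$, let $(\mathscr T,\bar{\mathbf I})$ be a $\lambda^+$-complete tagged tree, and let $g:\mathscr T\to\lambda$. Then there is a tree $\mathscr T^\dagger$ with $(\mathscr T,\bar{\mathbf I})\le^*(\mathscr T^\dagger,\bar{\mathbf I})$ and a function $g^\dagger:\omega\to\lambda$ such that $g(\eta)=g^\dagger(\ell g(\eta))$ for all $\eta\in\mathscr T^\dagger$.
   Context: A tree is a nonempty set $\mathscr T$ of finite sequences of ordinals, closed under initial segments, such that every $\eta\in\mathscr T$ has at least one immediate successor in $\mathscr T$; $\mathrm{Succ}_{\mathscr T}(\eta)=\{\eta^\frown\langle\alpha\rangle:\eta^\frown\langle\alpha\rangle\in\mathscr T\}$; $\ell g(\eta)$ is the length of $\eta$. An ideal on a set $X$ is a family of subsets of $X$ containing all singletons, closed under subsets and finite unions, and not containing $X$; it is $\mu$-complete if closed under unions of fewer than $\mu$ members. A tagged tree is a pair $(\mathscr T,\bar{\mathbf I})$ where $\mathscr T$ is a tree and $\bar{\mathbf I}$ assigns to some (possibly all) $\eta\in\mathscr T$ an ideal $\mathbf I_\eta$ on a set $\mathrm{Dom}(\mathbf I_\eta)\supseteq\mathrm{Succ}_{\mathscr T}(\eta)$; it is $\mu$-complete if every defined $\mathbf I_\eta$ is $\mu$-complete. $\eta$ is a splitting point if $\mathbf I_\eta$ is defined and $\mathrm{Succ}_{\mathscr T}(\eta)\notin\mathbf I_\eta$. For trees $\mathscr T'\subseteq\mathscr T$, $(\mathscr T,\bar{\mathbf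 I})\le^*(\mathscr T',\bar{\mathbf I})$ means: for every $\eta\in\mathscr T'$ which is a splitting point of $(\mathscr T,\bar{\mathbf I})$ we have $\mathrm{Succ}_{\mathscr T'}(\eta)\notin\mathbf I_\eta$. *)

theory Defs
  imports Main
begin

definition Succ :: "'a list set \<Rightarrow> 'a list \<Rightarrow> 'a list set" where
  "Succ T \<eta> = {\<eta> @ [a] | a. \<eta> @ [a] \<in> T}"

definition is_tree :: "'a list set \<Rightarrow> bool" where
  "is_tree T \<longleftrightarrow> T \<noteq> {} \<and> (\<forall>\<eta>\<in>T. \<forall>n. take n \<eta> \<in> T) \<and> (\<forall>\<eta>\<in>T. Succ T \<eta> \<noteq> {})"

definition ideal_on :: "'x set \<Rightarrow> 'x set set \<Rightarrow> bool" where
  "ideal_on X I \<longleftrightarrow>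
     (\<forall>A\<in>I. A \<subseteq> X) \<and> (\<forall>x\<in>X. {x} \<in> I) \<and>
     (\<forall>A\<in>I. \<forall>B. B \<subseteq> A \<longrightarrow> B \<in> I) \<and>
     (\<forall>A\<in>I. \<forall>B\<in>I. A \<union> B \<in> I) \<and> X \<notin> I"

definition complete_ideal :: "'c rel \<Rightarrow> 'x set \<Rightarrow> 'x set set \<Rightarrow> bool" where
  "complete_ideal mu X I \<longleftrightarrow> ideal_on X I \<and>
     (\<forall>F. F \<subseteq> I \<and> (card_of F, mu) \<in> ordLess \<longrightarrow> \<Union>F \<in> I)"

text \<open>A tagging assigns to some nodes eta a pair (Dom(I_eta), I_eta).\<close>
type_synonym 'a tagging = "'a list \<Rightarrow> ('a list set \<times> 'a list set set) option"

definition tagged_tree :: "'a list set \<Rightarrow> 'a tagging \<Rightarrow> bool" where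
  "tagged_tree T Ib \<longleftrightarrow> is_tree T \<and>
     (\<forall>\<eta> D I. Ib \<eta> = Some (D, I) \<longrightarrow> \<eta> \<in> T \<and> ideal_on D I \<and> Succ T \<eta> \<subseteq> D)"

definition complete_tagged_tree :: "'c rel \<Rightarrow> 'a list set \<Rightarrow> 'a tagging \<Rightarrow> bool" where
  "complete_tagged_tree mu T Ib \<longleftrightarrow> tagged_tree T Ib \<and>
     (\<forall>\<eta> D I. Ib \<eta> = Some (D, I) \<longrightarrow> complete_ideal mu D I)"

definition splitting_point :: "'a list set \<Rightarrow> 'a tagging \<Rightarrow> 'a list \<Rightarrow> bool" where
  "splitting_point T Ib \<eta> \<longleftrightarrow> (\<exists>D I. Ib \<eta> = Some (D, I) \<and> Succ T \<eta> \<notin> I)"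

definition le_star :: "'a list set \<Rightarrow> 'a tagging \<Rightarrow> 'a list set \<Rightarrow> bool" where
  "le_star T Ib T' \<longleftrightarrow> T' \<subseteq> T \<and>
     (\<forall>\<eta>\<in>T'. splitting_point T Ib \<eta> \<longrightarrow> (\<forall>D I. Ib \<eta> = Some (D, I) \<longrightarrow> Succ T' \<eta> \<notin> I))"

end

theory Submission
  imports Defs
begin

definition Th :: "('a list \<Rightarrow> 'b) \<Rightarrow> (nat \<Rightarrow> 'b) \<Rightarrow> 'a list \<Rightarrow> bool" where
  "Th g h \<eta> \<longleftrightarrow> (\<forall>k \<le> length \<eta>. g (take k \<eta>) = h k)"

definition okw :: "'a list set \<Rightarrow> 'a tagging \<Rightarrow> 'a list \<Rightarrow> 'a list set \<Rightarrow> bool" where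
  "okw T Ib \<eta> A \<longleftrightarrow> (splitting_point T Ib \<eta> \<longrightarrow> (\<exists>D I. Ib \<eta> = Some (D, I) \<and> A \<in> I))
      \<and> (\<not> splitting_point T Ib \<eta> \<longrightarrow> A = {})"

definition EE :: "'a list set \<Rightarrow> 'a tagging \<Rightarrow> ('a list \<Rightarrow> 'b) \<Rightarrow> (nat \<Rightarrow> 'b)
   \<Rightarrow> ('a list \<Rightarrow> 'a list set) \<Rightarrow> ('a list \<times> 'a list) set" where
  "EE T Ib g h F = {(\<nu>, \<xi>). Th g h \<xi> \<and> \<nu> \<in> Succ T \<xi> \<and> (okw T Ib \<xi> (F \<xi>) \<longrightarrow> \<nu> \<notin> F \<xi>)}"

definition QQ :: "'a list set \<Rightarrow> 'a tagging \<Rightarrow> ('a list \<Rightarrow> 'b) \<Rightarrow> (nat \<Rightarrow> 'b) \<Rightarrow> 'a list \<Rightarrow> bool" where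
  "QQ T Ib g h \<eta> \<longleftrightarrow> (\<exists>F. \<eta> \<in> Wellfounded.acc (EE T Ib g h F))"

lemma Succ_mem: "\<nu> \<in> Succ T \<xi> \<longleftrightarrow> (\<exists>a. \<nu> = \<xi> @ [a] \<and> \<nu> \<in> T)"
  unfolding Succ_def by auto

lemma acc_chain:
  assumes "x \<in> Wellfounded.acc r"
  shows "\<forall>f :: nat \<Rightarrow> 'a. f 0 = x \<longrightarrow> (\<exists>n. (f (Suc n), f n) \<notin> r)"
  using assms
proof (induction rule: acc_induct_rule)
  case (1 x)
  show ?case
  proof (intro allI impI)
    fix f :: "nat \<Rightarrow> 'a" assume f0: "f 0 = x"
    show "\<exists>n. (f (Suc n), f n) \<notin> r"
    proof (cases "(f (Suc 0), f 0) \<in> r")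
      case True
      then have "(f (Suc 0), x) \<in> r" using f0 by simp
      then have "\<forall>f' :: nat \<Rightarrow> 'a. f' 0 = f (Suc 0) \<longrightarrow> (\<exists>n. (f' (Suc n), f' n) \<notin> r)"
        by (rule 1)
      then have "\<exists>n. (f (Suc (Suc n)), f (Suc n)) \<notin> r"
        by (rule allE[of _ "\<lambda>n. f (Suc n)"]) simp
      then show ?thesis by blast
    qed blast
  qed
qed

lemma acc_transfer:
  assumes "\<xi> \<in> Wellfounded.acc (EE T Ib g h G)"
    and "\<And>\<xi>'. P \<xi>' \<Longrightarrow> F \<xi>' = G \<xi>'"
    and "\<And>\<xi>' \<zeta>. P \<xi>' \<Longrightarrow> \<zeta> \<in> Succ T \<xi>' \<Longrightarrow> P \<zeta>"
    and "P \<xi>"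
  shows "\<xi> \<in> Wellfounded.acc (EE T Ib g h F)"
proof -
  have "P \<xi> \<longrightarrow> \<xi> \<in> Wellfounded.acc (EE T Ib g h F)"
    using assms(1)
  proof (induction rule: acc_induct_rule)
    case (1 x)
    show ?case
    proof (rule impI, rule accI)
      assume Px: "P x"
      fix y assume y: "(y, x) \<in> EE T Ib g h F"
      then have "y \<in> Succ T x" unfolding EE_def by auto
      then have Py: "P y" using assms(3) Px by blast
      have "(y, x) \<in> EE T Ib g h G" using y assms(2)[OF Px] unfolding EE_def by auto
      then show "y \<in> Wellfounded.acc (EE T Ib g h F)" using 1 Py by blast
    qed
  qed
  then show ?thesis using assms(4) by blast
qed

lemma not_Th_Q: "\<not> Th g h \<eta> \<Longrightarrow> QQ T Ib g h \<eta>"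
  unfolding QQ_def by (rule exI[of _ "\<lambda>_. {}"], rule accI, auto simp: EE_def)

lemma glue:
  assumes ok: "okw T Ib \<eta> A"
    and nxt: "\<forall>\<nu> \<in> Succ T \<eta>. \<nu> \<notin> A \<longrightarrow> QQ T Ib g h \<nu>"
  shows "QQ T Ib g h \<eta>"
proof -
  define S where "S = Succ T \<eta> - A"
  define Fs where "Fs \<nu> = (SOME F. \<nu> \<in> Wellfounded.acc (EE T Ib g h F))" for \<nu>
  have Fs: "\<nu> \<in> Wellfounded.acc (EE T Ib g h (Fs \<nu>))" if "\<nu> \<in> S" for \<nu>
  proof -
    have "\<exists>F. \<nu> \<in> Wellfounded.acc (EE T Ib g h F)" using nxt that unfolding S_def QQ_def by blast
    then show ?thesis unfolding Fs_def by (rule someI_ex)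
  qed
  define F where "F \<xi> = (if \<xi> = \<eta> then A else
       if length \<eta> < length \<xi> \<and> take (Suc (length \<eta>)) \<xi> \<in> S
       then Fs (take (Suc (length \<eta>)) \<xi>) \<xi> else {})" for \<xi>
  have "\<eta> \<in> Wellfounded.acc (EE T Ib g h F)"
  proof (rule accI)
    fix \<nu> assume e: "(\<nu>, \<eta>) \<in> EE T Ib g h F"
    then have s: "\<nu> \<in> Succ T \<eta>" unfolding EE_def by auto
    have "F \<eta> = A" unfolding F_def by simp
    then have "\<nu> \<notin> A" using e ok unfolding EE_def by auto
    then have nS: "\<nu> \<in> S" using s S_def by auto
    obtain a where a: "\<nu> = \<eta> @ [a]" using s Succ_mem by metis
    define P where "P \<xi>' = (length \<eta> < length \<xi>' \<and> take (Suc (length \<eta>)) \<xi>' = \<nu>)" for \<xi>'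
    show "\<nu> \<in> Wellfounded.acc (EE T Ib g h F)"
    proof (rule acc_transfer[OF Fs[OF nS], where P = P])
      fix \<xi>' assume "P \<xi>'"
      then show "F \<xi>' = Fs \<nu> \<xi>'" unfolding F_def P_def using nS by auto
    next
      fix \<xi>' \<zeta> assume "P \<xi>'" "\<zeta> \<in> Succ T \<xi>'"
      then show "P \<zeta>" unfolding P_def Succ_mem by auto
    next
      show "P \<nu>" unfolding P_def a by simp
    qed
  qed
  then show ?thesis unfolding QQ_def by blast
qed

theorem mainTheorem2:
  fixes T :: "'a list set" and Ib :: "'a tagging"
    and L :: "'b set" and g :: "'a list \<Rightarrow> 'b"
  assumes "(BNF_Cardinal_Arithmetic.cexp (card_of L) natLeq, card_of L) \<in> ordIso"
    and "complete_tagged_tree (cardSuc (card_of L)) T Ib"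
    and "\<forall>\<eta>\<in>T. g \<eta> \<in> L"
  shows "\<exists>T'. is_tree T' \<and> le_star T Ib T' \<and>
           (\<exists>g' :: nat \<Rightarrow> 'b. (\<forall>n. g' n \<in> L) \<and> (\<forall>\<eta>\<in>T'. g \<eta> = g' (length \<eta>)))"
proof -
  have tt: "tagged_tree T Ib" and cpl: "\<And>\<eta> D I. Ib \<eta> = Some (D, I) \<Longrightarrow> complete_ideal (cardSuc (card_of L)) D I"
    using assms(2) unfolding complete_tagged_tree_def by auto
  have tree: "is_tree T" using tt unfolding tagged_tree_def by auto
  have tagI: "\<And>\<eta> D I. Ib \<eta> = Some (D, I) \<Longrightarrow> \<eta> \<in> T \<and> ideal_on D I \<and> Succ T \<eta> \<subseteq> D"
    using tt unfolding tagged_tree_def by blast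
  have SuccT: "Succ T \<eta> \<subseteq> T" for \<eta> unfolding Succ_def by auto
  have Succne: "\<eta> \<in> T \<Longrightarrow> Succ T \<eta> \<noteq> {}" for \<eta> using tree unfolding is_tree_def by auto
  have emptyI: "{} \<in> I" if "Ib \<eta> = Some (D, I)" for \<eta> D I
  proof -
    have "\<eta> \<in> T" "ideal_on D I" "Succ T \<eta> \<subseteq> D" using tagI[OF that] by auto
    then obtain x where "x \<in> D" using Succne by blast
    then have "{x} \<in> I" using \<open>ideal_on D I\<close> unfolding ideal_on_def by auto
    then show ?thesis using \<open>ideal_on D I\<close> unfolding ideal_on_def by blast
  qed
  define H where "H = {h :: nat \<Rightarrow> 'b. \<forall>n. h n \<in> L}"
  have HF: "H = Func (Field natLeq) (Field (card_of L))"
    unfolding H_def Func_def Field_natLeq Field_card_of by auto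
  have cardH: "(card_of H, cardSuc (card_of L)) \<in> ordLess"
  proof -
    have "(card_of H, card_of L) \<in> ordIso" using assms(1) unfolding cexp_def HF .
    then show ?thesis using cardSuc_greater[OF card_of_Card_order] ordIso_ordLess_trans by blast
  qed
  show ?thesis
  proof (cases "\<exists>h\<in>H. \<not> QQ T Ib g h []")
    case True
    then obtain h where hH: "h \<in> H" and nq: "\<not> QQ T Ib g h []" by blast
    define Good where "Good = {\<eta> \<in> T. \<not> QQ T Ib g h \<eta>}"
    have gTh: "Th g h \<eta>" if "\<eta> \<in> Good" for \<eta>
      using that not_Th_Q unfolding Good_def by blast
    have gsplit: "Succ T \<eta> \<inter> Good \<notin> I" if "\<eta> \<in> Good" "Ib \<eta> = Some (D, I)" "splitting_point T Ib \<eta>" for \<eta> D I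
    proof
      assume A: "Succ T \<eta> \<inter> Good \<in> I"
      have "okw T Ib \<eta> (Succ T \<eta> \<inter> Good)" unfolding okw_def using A that(2,3) by auto
      moreover have "\<forall>\<nu> \<in> Succ T \<eta>. \<nu> \<notin> Succ T \<eta> \<inter> Good \<longrightarrow> QQ T Ib g h \<nu>"
        using SuccT unfolding Good_def by auto
      ultimately have "QQ T Ib g h \<eta>" by (rule glue)
      then show False using that(1) unfolding Good_def by auto
    qed
    have gnext: "\<exists>\<nu> \<in> Succ T \<eta>. \<nu> \<in> Good" if "\<eta> \<in> Good" for \<eta>
    proof (cases "splitting_point T Ib \<eta>")
      case True
      then obtain D I where DI: "Ib \<eta> = Some (D, I)" unfolding splitting_point_def by auto
      then have "Succ T \<eta> \<inter> Good \<noteq> {}" using gsplit[OF that DI True] emptyI[OF DI] by auto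
      then show ?thesis by auto
    next
      case False
      show ?thesis
      proof (rule ccontr)
        assume "\<not> ?thesis"
        then have "\<forall>\<nu> \<in> Succ T \<eta>. \<nu> \<notin> {} \<longrightarrow> QQ T Ib g h \<nu>"
          using SuccT unfolding Good_def by auto
        moreover have "okw T Ib \<eta> {}" unfolding okw_def using False by auto
        ultimately have "QQ T Ib g h \<eta>" using glue by blast
        then show False using that unfolding Good_def by auto
      qed
    qed
    define T' where "T' = {\<eta>. \<forall>k. take k \<eta> \<in> Good}"
    have T'G: "T' \<subseteq> Good" unfolding T'_def by (auto, metis take_all order_refl)
    have GT: "Good \<subseteq> T" unfolding Good_def by auto
    have nilT: "[] \<in> T" using tree unfolding is_tree_def by (metis ex_in_conv take0)
    have nilG: "[] \<in> Good" using nq nilT unfolding Good_def by blast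
    have succT': "\<nu> \<in> T'" if pr: "\<eta> \<in> T'" "\<nu> \<in> Succ T \<eta>" "\<nu> \<in> Good" for \<eta> \<nu>
    proof -
      obtain a where a: "\<nu> = \<eta> @ [a]" using pr(2) Succ_mem by metis
      have "take k \<nu> \<in> Good" for k
      proof (cases "k \<le> length \<eta>")
        case True then show ?thesis using pr(1) unfolding T'_def a by simp
      next
        case False then have "take k \<nu> = \<nu>" unfolding a by simp
        then show ?thesis using pr(3) by simp
      qed
      then show ?thesis unfolding T'_def by simp
    qed
    have "is_tree T'"
      unfolding is_tree_def
    proof (intro conjI ballI allI)
      have "[] \<in> T'" using nilG unfolding T'_def by simp
      then show "T' \<noteq> {}" by auto
    next
      fix \<eta> n assume "\<eta> \<in> T'" then show "take n \<eta> \<in> T'" unfolding T'_def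
        by (simp add: min_def)
    next
      fix \<eta> assume e: "\<eta> \<in> T'"
      then obtain \<nu> where "\<nu> \<in> Succ T \<eta>" "\<nu> \<in> Good" using gnext T'G by blast
      then have "\<nu> \<in> T'" using succT' e by blast
      then show "Succ T' \<eta> \<noteq> {}" using \<open>\<nu> \<in> Succ T \<eta>\<close> unfolding Succ_def by auto
    qed
    moreover have "le_star T Ib T'"
      unfolding le_star_def
    proof (intro conjI ballI impI allI)
      show "T' \<subseteq> T" using T'G GT by auto
    next
      fix \<eta> D I assume e: "\<eta> \<in> T'" and sp: "splitting_point T Ib \<eta>" and DI: "Ib \<eta> = Some (D, I)"
      have sub: "Succ T \<eta> \<inter> Good \<subseteq> Succ T' \<eta>" using succT'[OF e] unfolding Succ_def by auto
      have "Succ T \<eta> \<inter> Good \<notin> I" using gsplit[OF _ DI sp] e T'G by auto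
      moreover have "ideal_on D I" using tagI[OF DI] by auto
      ultimately show "Succ T' \<eta> \<notin> I" using sub unfolding ideal_on_def by blast
    qed
    moreover have "(\<forall>n. h n \<in> L) \<and> (\<forall>\<eta>\<in>T'. g \<eta> = h (length \<eta>))"
    proof (intro conjI ballI allI)
      show "h n \<in> L" for n using hH unfolding H_def by auto
      fix \<eta> assume "\<eta> \<in> T'" then have "Th g h \<eta>" using gTh T'G by auto
      then show "g \<eta> = h (length \<eta>)" unfolding Th_def by (metis order_refl take_all)
    qed
    ultimately show ?thesis by blast
  next
    case False
    then have allQ: "\<forall>h\<in>H. QQ T Ib g h []" by blast
    define Fh where "Fh h = (SOME F. [] \<in> Wellfounded.acc (EE T Ib g h F))" for h
    have Fh: "[] \<in> Wellfounded.acc (EE T Ib g h (Fh h))" if "h \<in> H" for h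
    proof -
      have "\<exists>F. [] \<in> Wellfounded.acc (EE T Ib g h F)" using allQ that unfolding QQ_def by blast
      then show ?thesis unfolding Fh_def by (rule someI_ex)
    qed
    define U where "U \<eta> = \<Union> ((\<lambda>h. Fh h \<eta>) ` {h \<in> H. okw T Ib \<eta> (Fh h \<eta>)})" for \<eta>
    have step: "\<exists>\<nu>. \<nu> \<in> Succ T \<eta> \<and> \<nu> \<notin> U \<eta>" if "\<eta> \<in> T" for \<eta>
    proof (cases "splitting_point T Ib \<eta>")
      case True
      then obtain D I where DI: "Ib \<eta> = Some (D, I)" and nS: "Succ T \<eta> \<notin> I"
        unfolding splitting_point_def by auto
      have sub: "(\<lambda>h. Fh h \<eta>) ` {h \<in> H. okw T Ib \<eta> (Fh h \<eta>)} \<subseteq> I"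
        using True DI unfolding okw_def by auto
      have "(card_of ((\<lambda>h. Fh h \<eta>) ` {h \<in> H. okw T Ib \<eta> (Fh h \<eta>)}), card_of {h \<in> H. okw T Ib \<eta> (Fh h \<eta>)}) \<in> ordLeq"
        by (rule card_of_image)
      moreover have "(card_of {h \<in> H. okw T Ib \<eta> (Fh h \<eta>)}, card_of H) \<in> ordLeq" by (rule card_of_mono1) auto
      ultimately have "(card_of ((\<lambda>h. Fh h \<eta>) ` {h \<in> H. okw T Ib \<eta> (Fh h \<eta>)}), cardSuc (card_of L)) \<in> ordLess"
        using cardH ordLeq_ordLess_trans ordLeq_transitive by blast
      then have "U \<eta> \<in> I" using cpl[OF DI] sub unfolding complete_ideal_def U_def by blast
      moreover have "ideal_on D I" using tagI[OF DI] by auto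
      ultimately have "\<not> Succ T \<eta> \<subseteq> U \<eta>" using nS unfolding ideal_on_def by blast
      then show ?thesis by auto
    next
      case False
      then have "U \<eta> = {}" unfolding U_def okw_def by auto
      then show ?thesis using Succne[OF that] by auto
    qed
    define br where "br = rec_nat [] (\<lambda>n \<eta>. SOME \<nu>. \<nu> \<in> Succ T \<eta> \<and> \<nu> \<notin> U \<eta>)"
    have br0: "br 0 = []" unfolding br_def by simp
    have brS: "br (Suc n) = (SOME \<nu>. \<nu> \<in> Succ T (br n) \<and> \<nu> \<notin> U (br n))" for n
      unfolding br_def by simp
    have brT: "br n \<in> T \<and> length (br n) = n \<and> (\<forall>k\<le>n. take k (br n) = br k)" for n
    proof (induction n)
      case 0
      have "[] \<in> T" using tree unfolding is_tree_def by (metis ex_in_conv take0)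
      then show ?case using br0 by simp
    next
      case (Suc n)
      have "br (Suc n) \<in> Succ T (br n)" using someI_ex[OF step] Suc brS by metis
      then obtain a where a: "br (Suc n) = br n @ [a]" "br (Suc n) \<in> T" using Succ_mem by metis
      have "\<forall>k\<le>Suc n. take k (br (Suc n)) = br k"
      proof (intro allI impI)
        fix k assume "k \<le> Suc n"
        then consider "k \<le> n" | "k = Suc n" by linarith
        then show "take k (br (Suc n)) = br k"
          by cases (use Suc a in auto)
      qed
      then show ?case using a Suc by simp
    qed
    have brstep: "br (Suc n) \<in> Succ T (br n) \<and> br (Suc n) \<notin> U (br n)" for n
      using someI_ex[OF step] brT brS by metis
    define hs where "hs n = g (br n)" for n
    have hsH: "hs \<in> H" unfolding H_def hs_def using assms(3) brT by auto
    have "\<forall>n. (br (Suc n), br n) \<in> EE T Ib g hs (Fh hs)"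
    proof
      fix n
      have "Th g hs (br n)" unfolding Th_def hs_def using brT by auto
      moreover have "okw T Ib (br n) (Fh hs (br n)) \<longrightarrow> br (Suc n) \<notin> Fh hs (br n)"
        using brstep[of n] hsH unfolding U_def by auto
      ultimately show "(br (Suc n), br n) \<in> EE T Ib g hs (Fh hs)"
        unfolding EE_def using brstep by auto
    qed
    moreover have "\<exists>n. (br (Suc n), br n) \<notin> EE T Ib g hs (Fh hs)"
      using acc_chain[OF Fh[OF hsH]] br0 by blast
    ultimately show ?thesis by blast
  qed
qed

end
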